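(* Let $k$ be a field and $Q$ a finitely generated commutative monoid. If $I_\ell\supsetneq\cdots\supsetneq I_0$ is a chain of distinct binomial ideals of $k[Q]$ all inducing the same congruence on $Q$, then $\ell\le1$. Moreover, if $\ell=1$ then $I_1$ contains monomials, $I_0$ contains none, and $I_0=I_1\cap\mathfrak a$ for some augmentation ideal $\mathfrak a$ compatible with $I_1$.
   Context: $k[Q]=\bigoplus_{q\in Q}k\,t^q$ with $t^pt^q=t^{p+q}$. A \emph{binomial ideal} is an ideal generated by elements $t^p-\lambda t^q$ with $\lambda\in k$ ($\lambda=0$ allowed). A binomial ideal $I$ \emph{induces} the congruence $\sim_I$ on $Q$: $p\sim_I q$ iff $t^p-\lambda t^q\in I$ for some $\lambda\in k^*$. An \emph{augmentation ideal compatible with} a binomial ideal $I$ is a proper ideal of the form $\mathfrak a=\langle t^q-\lambda_q: q\in Q\rangle$ with all $\lambda_q\in k^*$ such that $I\cap\mathfrak a$ is a binomial ideal. *)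

theory Defs
  imports "HOL-Library.Poly_Mapping"
begin

text \<open>The monoid algebra k[Q] is modelled as the type of finitely supported functions
  'q =>0 'k, with the commutative monoid Q written additively ('q::comm_monoid_add).
  The product of poly_mapping is convolution, so Poly_Mapping.single q 1 is the monomial t^q.\<close>

abbreviation mono_t :: "'q::comm_monoid_add \<Rightarrow> ('q \<Rightarrow>\<^sub>0 'k::field)" where
  "mono_t q \<equiv> Poly_Mapping.single q 1"

inductive_set monoid_span :: "'q::comm_monoid_add set \<Rightarrow> 'q set" for G where
  span_zero: "0 \<in> monoid_span G"
| span_gen: "g \<in> G \<Longrightarrow> g \<in> monoid_span G"
| span_add: "a \<in> monoid_span G \<Longrightarrow> b \<in> monoid_span G \<Longrightarrow> a + b \<in> monoid_span G"

definition finitely_generated_monoid :: "'q::comm_monoid_add itself \<Rightarrow> bool" where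
  "finitely_generated_monoid _ \<longleftrightarrow> (\<exists>G::'q set. finite G \<and> monoid_span G = UNIV)"

definition is_ideal :: "'a::comm_ring_1 set \<Rightarrow> bool" where
  "is_ideal I \<longleftrightarrow> 0 \<in> I \<and> (\<forall>a\<in>I. \<forall>b\<in>I. a + b \<in> I) \<and> (\<forall>r a. a \<in> I \<longrightarrow> r * a \<in> I)"

definition ideal_gen :: "'a::comm_ring_1 set \<Rightarrow> 'a set" where
  "ideal_gen S = \<Inter>{I. is_ideal I \<and> S \<subseteq> I}"

definition binomials :: "('q::comm_monoid_add \<Rightarrow>\<^sub>0 'k::field) set" where
  "binomials = {mono_t p - Poly_Mapping.single q c | p q c. True}"

definition binomial_ideal :: "('q::comm_monoid_add \<Rightarrow>\<^sub>0 'k::field) set \<Rightarrow> bool" where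
  "binomial_ideal I \<longleftrightarrow> (\<exists>B. B \<subseteq> binomials \<and> I = ideal_gen B)"

definition induced_cong :: "('q::comm_monoid_add \<Rightarrow>\<^sub>0 'k::field) set \<Rightarrow> 'q \<Rightarrow> 'q \<Rightarrow> bool" where
  "induced_cong I p q \<longleftrightarrow> (\<exists>c::'k. c \<noteq> 0 \<and> mono_t p - Poly_Mapping.single q c \<in> I)"

definition augmentation_compatible ::
  "('q::comm_monoid_add \<Rightarrow>\<^sub>0 'k::field) set \<Rightarrow> ('q \<Rightarrow>\<^sub>0 'k) set \<Rightarrow> bool" where
  "augmentation_compatible I A \<longleftrightarrow>
     (\<exists>c::'q \<Rightarrow> 'k. (\<forall>q. c q \<noteq> 0) \<and>
        A = ideal_gen (range (\<lambda>q. mono_t q - Poly_Mapping.single 0 (c q)))) \<and>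
     A \<noteq> UNIV \<and> binomial_ideal (I \<inter> A)"

end

theory Submission
  imports Defs
begin
lemma ideal_gen_ideal: "is_ideal (ideal_gen S)"
  unfolding ideal_gen_def is_ideal_def by auto
lemma ideal_gen_sub: "S \<subseteq> ideal_gen S"
  unfolding ideal_gen_def by auto
lemma ideal_gen_least: "is_ideal J \<Longrightarrow> S \<subseteq> J \<Longrightarrow> ideal_gen S \<subseteq> J"
  unfolding ideal_gen_def by auto

lemma id_zero: "is_ideal I \<Longrightarrow> 0 \<in> I" unfolding is_ideal_def by auto
lemma id_add: "is_ideal I \<Longrightarrow> a \<in> I \<Longrightarrow> b \<in> I \<Longrightarrow> a + b \<in> I" unfolding is_ideal_def by auto
lemma id_mult: "is_ideal I \<Longrightarrow> a \<in> I \<Longrightarrow> r * a \<in> I" unfolding is_ideal_def by auto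
lemma id_diff: "is_ideal (I::'a::comm_ring_1 set) \<Longrightarrow> a \<in> I \<Longrightarrow> b \<in> I \<Longrightarrow> a - b \<in> I"
  using id_add[of I a "(-1) * b"] id_mult[of I b "-1"] by simp

lemma bin_ideal: "binomial_ideal I \<Longrightarrow> is_ideal I"
  unfolding binomial_ideal_def using ideal_gen_ideal by auto

lemma mono_mul: "Poly_Mapping.single p a * Poly_Mapping.single q b = Poly_Mapping.single (p+q) (a*b)"
  by (simp add: mult_single)

lemma poly_induct:
  assumes "P 0" "\<And>f q c. P f \<Longrightarrow> P (Poly_Mapping.single q c + f)"
  shows "P f"
proof (induction f rule: update_induct)
  case const then show ?case using assms by simp
next
  case (update f a b)
  have "Poly_Mapping.update a b f = Poly_Mapping.single a b + f"
    using update(1) by (intro poly_mapping_eqI) (auto simp: Poly_Mapping.lookup_update lookup_add lookup_single in_keys_iff when_def)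
  then show ?case using assms update by simp
qed


lemma scal_mono:
  fixes I :: "('q::comm_monoid_add \<Rightarrow>\<^sub>0 'k::field) set"
  assumes "is_ideal I" "Poly_Mapping.single q c \<in> I" "c \<noteq> 0"
  shows "mono_t q \<in> I"
proof -
  have "Poly_Mapping.single 0 (inverse c) * Poly_Mapping.single q c \<in> I"
    using assms id_mult by blast
  then show ?thesis using assms(3) by (simp add: mono_mul)
qed

lemma key:
  fixes I J :: "('q::comm_monoid_add \<Rightarrow>\<^sub>0 'k::field) set"
  assumes bI: "binomial_ideal I" and bJ: "binomial_ideal J" and sub: "I \<subseteq> J"
    and cong: "induced_cong I = induced_cong J"
    and H: "(\<forall>q. mono_t q \<notin> J) \<or> (\<exists>m. mono_t m \<in> I)"
  shows "J \<subseteq> I"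
proof -
  have iI: "is_ideal I" using bI bin_ideal by blast
  have iJ: "is_ideal J" using bJ bin_ideal by blast
  obtain B where B: "B \<subseteq> binomials" "J = ideal_gen B" using bJ unfolding binomial_ideal_def by blast
  have M: "mono_t q \<in> I" if q: "mono_t q \<in> J" for q
  proof -
    from H q obtain m where m: "mono_t m \<in> I" by blast
    have "mono_t q - Poly_Mapping.single m 1 \<in> J" using q m sub id_diff[OF iJ] by blast
    then have "induced_cong J q m" unfolding induced_cong_def by (intro exI[of _ 1]) simp
    then obtain c where c: "c \<noteq> 0" "mono_t q - Poly_Mapping.single m c \<in> I"
      using cong unfolding induced_cong_def by metis
    have "Poly_Mapping.single 0 c * mono_t m \<in> I" using m id_mult[OF iI] by blast
    then have "Poly_Mapping.single m c \<in> I" by (simp add: mono_mul)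
    then have "(mono_t q - Poly_Mapping.single m c) + Poly_Mapping.single m c \<in> I"
      using c id_add[OF iI] by blast
    then show ?thesis by simp
  qed
  have "B \<subseteq> I"
  proof
    fix b assume "b \<in> B"
    then obtain p q c where b: "b = mono_t p - Poly_Mapping.single q c" using B unfolding binomials_def by blast
    have bJ': "b \<in> J" using \<open>b \<in> B\<close> B ideal_gen_sub by blast
    show "b \<in> I"
    proof (cases "c = 0")
      case True then show ?thesis using M bJ' b by simp
    next
      case False
      then have "induced_cong J p q" using bJ' b unfolding induced_cong_def by blast
      then obtain d where d: "d \<noteq> 0" "mono_t p - Poly_Mapping.single q d \<in> I"
        using cong unfolding induced_cong_def by metis
      show ?thesis
      proof (cases "d = c")
        case True then show ?thesis using d b by simp
      next
        case False
        have "b - (mono_t p - Poly_Mapping.single q d) \<in> J" using bJ' d sub id_diff[OF iJ] by blast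
        moreover have "b - (mono_t p - Poly_Mapping.single q d) = Poly_Mapping.single q (d - c)"
          using b by (simp add: single_diff)
        ultimately have "mono_t q \<in> J" using scal_mono[OF iJ] False by force
        then have mq: "mono_t q \<in> I" using M by blast
        have e: "Poly_Mapping.single 0 (d - c) * mono_t q = Poly_Mapping.single q (d - c)"
          by (simp add: mono_mul)
        have "b = (mono_t p - Poly_Mapping.single q d) + Poly_Mapping.single 0 (d - c) * mono_t q"
          unfolding e using b by (simp add: single_diff)
        then show ?thesis using d mq id_add[OF iI] id_mult[OF iI] by metis
      qed
    qed
  qed
  then show ?thesis using B ideal_gen_least[OF iI] by blast
qed


lemma aug:
  fixes I0 I1 :: "('q::comm_monoid_add \<Rightarrow>\<^sub>0 'k::field) set"
  assumes b0: "binomial_ideal I0" and b1: "binomial_ideal I1" and sub: "I0 \<subseteq> I1"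
    and cong: "induced_cong I0 = induced_cong I1"
    and m: "mono_t m \<in> I1" and nm: "\<forall>q. mono_t q \<notin> I0"
  shows "\<exists>A. augmentation_compatible I1 A \<and> I0 = I1 \<inter> A"
proof -
  have i0: "is_ideal I0" using b0 bin_ideal by blast
  have i1: "is_ideal I1" using b1 bin_ideal by blast
  have NZ: "z = 0" if "Poly_Mapping.single p z \<in> I0" for p and z :: 'k
    using scal_mono[OF i0 that] nm by blast
  have MM: "\<exists>c. c \<noteq> 0 \<and> mono_t q - Poly_Mapping.single m c \<in> I0" if q: "mono_t q \<in> I1" for q
  proof -
    have "mono_t q - Poly_Mapping.single m 1 \<in> I1" using q m id_diff[OF i1] by blast
    then have "induced_cong I1 q m" unfolding induced_cong_def by (intro exI[of _ 1]) simp
    then show ?thesis using cong unfolding induced_cong_def by metis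
  qed
  define \<phi> where "\<phi> r = (SOME c. c \<noteq> 0 \<and> mono_t (r + m) - Poly_Mapping.single m c \<in> I0)" for r
  have phi: "\<phi> r \<noteq> 0 \<and> mono_t (r + m) - Poly_Mapping.single m (\<phi> r) \<in> I0" for r
  proof -
    have "mono_t r * mono_t m \<in> I1" using m id_mult[OF i1] by blast
    then have "mono_t (r + m) \<in> I1" by (simp add: mono_mul)
    from MM[OF this] show ?thesis unfolding \<phi>_def by (rule someI_ex)
  qed
  define A where "A = ideal_gen (range (\<lambda>q. mono_t q - Poly_Mapping.single 0 (\<phi> q)))"
  have iA: "is_ideal A" unfolding A_def by (rule ideal_gen_ideal)
  have AT: "A \<subseteq> {f. f * mono_t m \<in> I0}"
    unfolding A_def
  proof (rule ideal_gen_least)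
    show "is_ideal {f. f * mono_t m \<in> I0}"
      unfolding is_ideal_def using i0 id_zero id_add id_mult
      by (auto simp: distrib_right mult.assoc)
    show "range (\<lambda>q. mono_t q - Poly_Mapping.single 0 (\<phi> q)) \<subseteq> {f. f * mono_t m \<in> I0}"
    proof clarsimp
      fix q
      have "(mono_t q - Poly_Mapping.single 0 (\<phi> q)) * mono_t m = mono_t (q + m) - Poly_Mapping.single m (\<phi> q)"
        by (simp add: left_diff_distrib mono_mul)
      then show "(mono_t q - Poly_Mapping.single 0 (\<phi> q)) * mono_t m \<in> I0" using phi by simp
    qed
  qed
  have genA: "mono_t q - Poly_Mapping.single 0 (\<phi> q) \<in> A" for q
    unfolding A_def by (rule subsetD[OF ideal_gen_sub]) auto
  have proper: "A \<noteq> UNIV"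
  proof
    assume "A = UNIV"
    then have "1 * mono_t m \<in> I0" using AT by blast
    then show False using nm by simp
  qed
  have I0A: "I0 \<subseteq> A"
  proof -
    obtain B where B: "B \<subseteq> binomials" "I0 = ideal_gen B" using b0 unfolding binomial_ideal_def by blast
    have "B \<subseteq> A"
    proof
      fix b assume "b \<in> B"
      then obtain p q c where b: "b = mono_t p - Poly_Mapping.single q c" using B unfolding binomials_def by blast
      have bI: "b \<in> I0" using \<open>b \<in> B\<close> B ideal_gen_sub by blast
      have x1: "b * mono_t m \<in> I0" using bI id_mult[OF i0] by (metis mult.commute)
      have x2: "Poly_Mapping.single 0 c * (mono_t (q + m) - Poly_Mapping.single m (\<phi> q)) \<in> I0"
        using phi id_mult[OF i0] by blast
      have x3: "mono_t (p + m) - Poly_Mapping.single m (\<phi> p) \<in> I0" using phi by blast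
      have "(mono_t (p + m) - Poly_Mapping.single m (\<phi> p)) - b * mono_t m - Poly_Mapping.single 0 c * (mono_t (q + m) - Poly_Mapping.single m (\<phi> q)) \<in> I0"
        using x1 x2 x3 id_diff[OF i0] by blast
      moreover have "(mono_t (p + m) - Poly_Mapping.single m (\<phi> p)) - b * mono_t m - Poly_Mapping.single 0 c * (mono_t (q + m) - Poly_Mapping.single m (\<phi> q))
          = Poly_Mapping.single m (c * \<phi> q - \<phi> p)"
        unfolding b by (simp add: left_diff_distrib right_diff_distrib mono_mul single_diff)
      ultimately have e: "c * \<phi> q = \<phi> p" using NZ by fastforce
      have "b = (mono_t p - Poly_Mapping.single 0 (\<phi> p)) - Poly_Mapping.single 0 c * (mono_t q - Poly_Mapping.single 0 (\<phi> q))"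
        unfolding b e[symmetric] by (simp add: right_diff_distrib mono_mul)
      then show "b \<in> A" using genA id_diff[OF iA] id_mult[OF iA] by metis
    qed
    then show ?thesis using B ideal_gen_least[OF iA] by blast
  qed
  define S where "S = {f. \<exists>a. f - Poly_Mapping.single m a \<in> I0}"
  have R: "\<exists>b. r * mono_t m - Poly_Mapping.single m b \<in> I0" for r
  proof (induction r rule: poly_induct)
    case 1 show ?case by (intro exI[of _ 0]) (simp add: id_zero[OF i0])
  next
    case (2 f q c)
    then obtain b where b: "f * mono_t m - Poly_Mapping.single m b \<in> I0" by blast
    have "Poly_Mapping.single 0 c * (mono_t (q + m) - Poly_Mapping.single m (\<phi> q)) \<in> I0"
      using phi id_mult[OF i0] by blast
    then have "Poly_Mapping.single 0 c * (mono_t (q + m) - Poly_Mapping.single m (\<phi> q)) + (f * mono_t m - Poly_Mapping.single m b) \<in> I0"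
      using b id_add[OF i0] by blast
    moreover have "Poly_Mapping.single 0 c * (mono_t (q + m) - Poly_Mapping.single m (\<phi> q)) + (f * mono_t m - Poly_Mapping.single m b)
       = (Poly_Mapping.single q c + f) * mono_t m - Poly_Mapping.single m (c * \<phi> q + b)"
      by (simp add: right_diff_distrib distrib_right mono_mul single_add algebra_simps)
    ultimately show ?case by metis
  qed
  have iS: "is_ideal S"
    unfolding is_ideal_def
  proof (intro conjI ballI allI impI)
    show "0 \<in> S" unfolding S_def using id_zero[OF i0] by (intro CollectI exI[of _ 0]) simp
  next
    fix a b assume "a \<in> S" "b \<in> S"
    then obtain x y where "a - Poly_Mapping.single m x \<in> I0" "b - Poly_Mapping.single m y \<in> I0"
      unfolding S_def by blast
    then have "(a - Poly_Mapping.single m x) + (b - Poly_Mapping.single m y) \<in> I0" using id_add[OF i0] by blast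
    then show "a + b \<in> S" unfolding S_def
      by (intro CollectI exI[of _ "x + y"]) (simp add: single_add algebra_simps)
  next
    fix r a assume "a \<in> S"
    then obtain x where x: "a - Poly_Mapping.single m x \<in> I0" unfolding S_def by blast
    obtain y where y: "r * mono_t m - Poly_Mapping.single m y \<in> I0" using R by blast
    have "r * (a - Poly_Mapping.single m x) + Poly_Mapping.single 0 x * (r * mono_t m - Poly_Mapping.single m y) \<in> I0"
      using x y id_add[OF i0] id_mult[OF i0] by blast
    moreover have "r * (a - Poly_Mapping.single m x) + Poly_Mapping.single 0 x * (r * mono_t m - Poly_Mapping.single m y)
        = r * a - Poly_Mapping.single m (x * y)"
    proof -
      have "Poly_Mapping.single 0 x * (r * mono_t m) = r * Poly_Mapping.single m x"
        by (metis (no_types, lifting) mono_mul add_0 mult.left_commute mult.right_neutral)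
      moreover have "Poly_Mapping.single 0 x * Poly_Mapping.single m y = Poly_Mapping.single m (x * y)"
        by (simp add: mono_mul)
      ultimately show ?thesis by (simp add: right_diff_distrib)
    qed
    ultimately show "r * a \<in> S" unfolding S_def by auto
  qed
  have I1S: "I1 \<subseteq> S"
  proof -
    obtain B where B: "B \<subseteq> binomials" "I1 = ideal_gen B" using b1 unfolding binomial_ideal_def by blast
    have MS: "mono_t q \<in> S" if "mono_t q \<in> I1" for q
      using MM[OF that] unfolding S_def by blast
    have "B \<subseteq> S"
    proof
      fix b assume "b \<in> B"
      then obtain p q c where b: "b = mono_t p - Poly_Mapping.single q c" using B unfolding binomials_def by blast
      have bI: "b \<in> I1" using \<open>b \<in> B\<close> B ideal_gen_sub by blast
      show "b \<in> S"
      proof (cases "c = 0")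
        case True then show ?thesis using MS bI b by simp
      next
        case False
        then have "induced_cong I1 p q" using bI b unfolding induced_cong_def by blast
        then obtain d where d: "d \<noteq> 0" "mono_t p - Poly_Mapping.single q d \<in> I0"
          using cong unfolding induced_cong_def by metis
        show ?thesis
        proof (cases "d = c")
          case True then show ?thesis using d b unfolding S_def by (intro CollectI exI[of _ 0]) simp
        next
          case False
          have "b - (mono_t p - Poly_Mapping.single q d) \<in> I1" using bI d sub id_diff[OF i1] by blast
          moreover have "b - (mono_t p - Poly_Mapping.single q d) = Poly_Mapping.single q (d - c)"
            using b by (simp add: single_diff)
          ultimately have "mono_t q \<in> I1" using scal_mono[OF i1] False by force
          then obtain \<mu> where mu: "mono_t q - Poly_Mapping.single m \<mu> \<in> I0" using MM by blast
          have "(mono_t p - Poly_Mapping.single q d) + Poly_Mapping.single 0 (d - c) * (mono_t q - Poly_Mapping.single m \<mu>) \<in> I0"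
            using d mu id_add[OF i0] id_mult[OF i0] by blast
          moreover have "(mono_t p - Poly_Mapping.single q d) + Poly_Mapping.single 0 (d - c) * (mono_t q - Poly_Mapping.single m \<mu>)
             = b - Poly_Mapping.single m ((d - c) * \<mu>)"
          proof -
            have e1: "Poly_Mapping.single 0 (d - c) * mono_t q = Poly_Mapping.single q d - Poly_Mapping.single q c"
              by (simp add: mono_mul single_diff[symmetric])
            have e2: "Poly_Mapping.single 0 (d - c) * Poly_Mapping.single m \<mu> = Poly_Mapping.single m ((d - c) * \<mu>)"
              by (simp add: mono_mul)
            show ?thesis unfolding b right_diff_distrib e1 e2 by simp
          qed
          ultimately show ?thesis unfolding S_def by auto
        qed
      qed
    qed
    then show ?thesis using B ideal_gen_least[OF iS] by blast
  qed
  have "I1 \<inter> A \<subseteq> I0"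
  proof
    fix f assume f: "f \<in> I1 \<inter> A"
    then obtain a where a: "f - Poly_Mapping.single m a \<in> I0" using I1S unfolding S_def by blast
    have "f * mono_t m \<in> I0" using f AT by blast
    moreover have "(f - Poly_Mapping.single m a) * mono_t m \<in> I0" using a id_mult[OF i0] by (metis mult.commute)
    ultimately have "f * mono_t m - (f - Poly_Mapping.single m a) * mono_t m \<in> I0" using id_diff[OF i0] by blast
    then have "Poly_Mapping.single (m + m) a \<in> I0" by (simp add: left_diff_distrib mono_mul)
    then have "a = 0" using NZ by blast
    then show "f \<in> I0" using a by simp
  qed
  then have eq: "I0 = I1 \<inter> A" using I0A sub by blast
  have "augmentation_compatible I1 A"
    unfolding augmentation_compatible_def
  proof (intro conjI)
    show "\<exists>c. (\<forall>q. c q \<noteq> 0) \<and> A = ideal_gen (range (\<lambda>q. mono_t q - Poly_Mapping.single 0 (c q)))"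
      using phi unfolding A_def by (intro exI[of _ \<phi>]) simp
    show "A \<noteq> UNIV" by (rule proper)
    show "binomial_ideal (I1 \<inter> A)" unfolding eq[symmetric] by (rule b0)
  qed
  then show ?thesis using eq by blast
qed


theorem theorem9p12:
  fixes I :: "nat \<Rightarrow> ('q::comm_monoid_add \<Rightarrow>\<^sub>0 'k::field) set" and l :: nat
  assumes "finitely_generated_monoid TYPE('q)"
    and "\<forall>i\<le>l. binomial_ideal (I i)"
    and "\<forall>i<l. I i \<subset> I (Suc i)"
    and "\<forall>i\<le>l. induced_cong (I i) = induced_cong (I 0)"
  shows "l \<le> 1 \<and>
    (l = 1 \<longrightarrow> (\<exists>q. mono_t q \<in> I 1) \<and> (\<forall>q. mono_t q \<notin> I 0) \<and>
       (\<exists>A. augmentation_compatible (I 1) A \<and> I 0 = I 1 \<inter> A))"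
proof -
  have two: "(\<exists>q. mono_t q \<in> I 1) \<and> (\<forall>q. mono_t q \<notin> I 0)" if "1 \<le> l"
  proof -
    have b0: "binomial_ideal (I 0)" and b1: "binomial_ideal (I 1)" using assms(2) that by auto
    have s: "I 0 \<subset> I 1" using assms(3) that by auto
    have c: "induced_cong (I 0) = induced_cong (I 1)" using assms(4)[rule_format, of 1] that by simp
    have s1: "I 0 \<subseteq> I 1" and s2: "\<not> I 1 \<subseteq> I 0" using s by auto
    show ?thesis
    proof (intro conjI)
      show "\<exists>q. mono_t q \<in> I 1"
      proof (rule ccontr)
        assume "\<not> (\<exists>q. mono_t q \<in> I 1)"
        then have "(\<forall>q. mono_t q \<notin> I 1) \<or> (\<exists>m. mono_t m \<in> I 0)" by simp
        from key[OF b0 b1 s1 c this] s2 show False by simp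
      qed
      show "\<forall>q. mono_t q \<notin> I 0"
      proof (rule ccontr)
        assume "\<not> (\<forall>q. mono_t q \<notin> I 0)"
        then have "(\<forall>q. mono_t q \<notin> I 1) \<or> (\<exists>m. mono_t m \<in> I 0)" by simp
        from key[OF b0 b1 s1 c this] s2 show False by simp
      qed
    qed
  qed
  have "l \<le> 1"
  proof (rule ccontr)
    assume "\<not> l \<le> 1"
    then have l2: "2 \<le> l" by simp
    have b1: "binomial_ideal (I 1)" and b2: "binomial_ideal (I 2)" using assms(2) l2 by auto
    have "1 < l" using l2 by simp
    then have s: "I 1 \<subset> I (Suc 1)" using assms(3) by blast
    then have s1: "I 1 \<subseteq> I 2" and s2: "\<not> I 2 \<subseteq> I 1" by (auto simp: numeral_2_eq_2)
    have c1: "induced_cong (I 1) = induced_cong (I 0)" using assms(4)[rule_format, of 1] l2 by simp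
    have c2: "induced_cong (I 2) = induced_cong (I 0)" using assms(4)[rule_format, of 2] l2 by simp
    have c: "induced_cong (I 1) = induced_cong (I 2)" using c1 c2 by simp
    have "\<exists>q. mono_t q \<in> I 1" using two l2 by simp
    then have "(\<forall>q. mono_t q \<notin> I 2) \<or> (\<exists>m. mono_t m \<in> I 1)" by simp
    from key[OF b1 b2 s1 c this] s2 show False by simp
  qed
  moreover have "l = 1 \<longrightarrow> (\<exists>A. augmentation_compatible (I 1) A \<and> I 0 = I 1 \<inter> A)"
  proof
    assume l1: "l = 1"
    have b0: "binomial_ideal (I 0)" and b1: "binomial_ideal (I 1)" using assms(2) l1 by auto
    have s: "I 0 \<subset> I 1" using assms(3) l1 by auto
    then have s1: "I 0 \<subseteq> I 1" by auto
    have c: "induced_cong (I 0) = induced_cong (I 1)" using assms(4)[rule_format, of 1] l1 by simp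
    from two l1 obtain m where m: "mono_t m \<in> I 1" and nm: "\<forall>q. mono_t q \<notin> I 0" by auto
    show "\<exists>A. augmentation_compatible (I 1) A \<and> I 0 = I 1 \<inter> A"
      by (rule aug[OF b0 b1 s1 c m nm])
  qed
  ultimately show ?thesis using two by auto
qed

end
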